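(* Let $d\ge7$ be odd and let $\pi^{(n)}$ denote $\tau^{(n)}$ for all $n\ge6$, or $\sigma^{(n)}$ for all $n\ge8$ (with $d-1$ in the allowed range). Write $\Omega^{(n)}=\Omega_{\pi^{(n)}}$, $Q^{(n)}=Q_{\pi^{(n)}}$. Then $O(Q^{(d)})$ is isomorphic to $\mathrm{Sp}(\overline{\Omega}^{(d-1)},\mathbb{Z}/2\mathbb{Z})$ if $d\equiv1\pmod4$, and to a semidirect product $O(Q^{(d-1)})\ltimes(\mathbb{Z}/2\mathbb{Z})^{d-1}$ if $d\equiv3\pmod4$.
   Context: $\tau^{(n)}$ has alphabet $\{1,\dots,n\}$, top row $1,2,\dots,n$, bottom row $n,n-1,\dots,6,3,2,5,4,1$; $\sigma^{(n)}$ has top row $1,\dots,n$, bottom row $n,n-1,\dots,8,3,2,7,6,5,4,1$ (rows list letters in order of $\pi_{\mathrm t}$, $\pi_{\mathrm b}$). $(\Omega_\pi)_{\alpha\beta}=+1$ if $\pi_{\mathrm t}(\alpha)<\pi_{\mathrm t}(\beta)$ and $\pi_{\mathrm b}(\alpha)>\pi_{\mathrm b}(\beta)$, $-1$ if the reverse inequalities hold, $0$ otherwise. Bar denotes reduction mod 2; $\mathrm{Sp}(\overline{\Omega},\mathbb{Z}/2\mathbb{Z})=\{S:S\overline{\Omega}S^{\intercal}=\overline{\Omega}\}$. $Q_\pi(u)=\sum_{\pi_{\mathrm t}(\alpha)<\pi_{\mathrm t}(\beta)}u_\alpha(\Omega_\pi)_{\alpha\beta}u_\beta+\sum_\alpha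 u_\alpha\bmod2$ on $(\mathbb{Z}/2\mathbb{Z})^{\mathcal{A}}$; $O(Q_\pi)$ is the group of invertible linear maps of $(\mathbb{Z}/2\mathbb{Z})^{\mathcal{A}}$ (row action) preserving $Q_\pi$. *)

theory Defs
  imports "HOL-Library.Z2" "HOL-Algebra.Bij"
begin

datatype family = Tau | Sigma

definition top_row :: "nat \<Rightarrow> nat list" where
  "top_row n = [1..<n+1]"

definition bot_row :: "family \<Rightarrow> nat \<Rightarrow> nat list" where
  "bot_row f n = (case f of
      Tau \<Rightarrow> rev [6..<n+1] @ [3,2,5,4,1]
    | Sigma \<Rightarrow> rev [8..<n+1] @ [3,2,7,6,5,4,1])"

definition fam_min :: "family \<Rightarrow> nat" where
  "fam_min f = (case f of Tau \<Rightarrow> 6 | Sigma \<Rightarrow> 8)"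

definition pos :: "nat list \<Rightarrow> nat \<Rightarrow> nat" where
  "pos L a = Suc (LEAST i. i < length L \<and> L ! i = a)"

definition pi_t :: "nat \<Rightarrow> nat \<Rightarrow> nat" where
  "pi_t n a = pos (top_row n) a"

definition pi_b :: "family \<Rightarrow> nat \<Rightarrow> nat \<Rightarrow> nat" where
  "pi_b f n a = pos (bot_row f n) a"

definition Omega :: "family \<Rightarrow> nat \<Rightarrow> nat \<Rightarrow> nat \<Rightarrow> int" where
  "Omega f n a b =
     (if pi_t n a < pi_t n b \<and> pi_b f n a > pi_b f n b then 1
      else if pi_t n a > pi_t n b \<and> pi_b f n a < pi_b f n b then -1
      else 0)"

definition vecs :: "nat \<Rightarrow> (nat \<Rightarrow> bit) set" where
  "vecs n = {u. \<forall>i. i \<notin> {1..n} \<longrightarrow> u i = 0}"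

definition mats :: "nat \<Rightarrow> (nat \<Rightarrow> nat \<Rightarrow> bit) set" where
  "mats n = {M. \<forall>i j. i \<notin> {1..n} \<or> j \<notin> {1..n} \<longrightarrow> M i j = 0}"

definition mat_mult :: "nat \<Rightarrow> (nat \<Rightarrow> nat \<Rightarrow> bit) \<Rightarrow> (nat \<Rightarrow> nat \<Rightarrow> bit) \<Rightarrow> (nat \<Rightarrow> nat \<Rightarrow> bit)" where
  "mat_mult n A B = (\<lambda>i j. \<Sum>k\<in>{1..n}. A i k * B k j)"

definition mat_id :: "nat \<Rightarrow> nat \<Rightarrow> nat \<Rightarrow> bit" where
  "mat_id n = (\<lambda>i j. if i = j \<and> i \<in> {1..n} then 1 else 0)"

definition mat_transpose :: "(nat \<Rightarrow> nat \<Rightarrow> bit) \<Rightarrow> (nat \<Rightarrow> nat \<Rightarrow> bit)" where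
  "mat_transpose A = (\<lambda>i j. A j i)"

definition mat_invertible :: "nat \<Rightarrow> (nat \<Rightarrow> nat \<Rightarrow> bit) \<Rightarrow> bool" where
  "mat_invertible n A \<longleftrightarrow> (\<exists>B\<in>mats n. mat_mult n A B = mat_id n \<and> mat_mult n B A = mat_id n)"

definition vec_mat :: "nat \<Rightarrow> (nat \<Rightarrow> bit) \<Rightarrow> (nat \<Rightarrow> nat \<Rightarrow> bit) \<Rightarrow> (nat \<Rightarrow> bit)" where
  "vec_mat n u M = (\<lambda>j. \<Sum>i\<in>{1..n}. u i * M i j)"

definition OmegaBar :: "family \<Rightarrow> nat \<Rightarrow> nat \<Rightarrow> nat \<Rightarrow> bit" where
  "OmegaBar f n a b = (if a \<in> {1..n} \<and> b \<in> {1..n} then of_int (Omega f n a b) else 0)"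

definition Qform :: "family \<Rightarrow> nat \<Rightarrow> (nat \<Rightarrow> bit) \<Rightarrow> bit" where
  "Qform f n u =
     (\<Sum>a\<in>{1..n}. \<Sum>b\<in>{1..n}.
        if pi_t n a < pi_t n b then u a * of_int (Omega f n a b) * u b else 0)
     + (\<Sum>a\<in>{1..n}. u a)"

definition O_group :: "family \<Rightarrow> nat \<Rightarrow> (nat \<Rightarrow> nat \<Rightarrow> bit) monoid" where
  "O_group f n =
     \<lparr>carrier = {M \<in> mats n. mat_invertible n M \<and>
                   (\<forall>u\<in>vecs n. Qform f n (vec_mat n u M) = Qform f n u)},
      mult = mat_mult n,
      one = mat_id n\<rparr>"

definition Sp_group :: "family \<Rightarrow> nat \<Rightarrow> (nat \<Rightarrow> nat \<Rightarrow> bit) monoid" where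
  "Sp_group f n =
     \<lparr>carrier = {S \<in> mats n. mat_invertible n S \<and>
                   mat_mult n (mat_mult n S (OmegaBar f n)) (mat_transpose S) = OmegaBar f n},
      mult = mat_mult n,
      one = mat_id n\<rparr>"

definition vec_group :: "nat \<Rightarrow> (nat \<Rightarrow> bit) monoid" where
  "vec_group n = \<lparr>carrier = vecs n, mult = (\<lambda>u v i. u i + v i), one = (\<lambda>i. 0)\<rparr>"

definition semidirect_prod ::
  "('n, 'c) monoid_scheme \<Rightarrow> ('h, 'd) monoid_scheme \<Rightarrow> ('h \<Rightarrow> 'n \<Rightarrow> 'n) \<Rightarrow> ('n \<times> 'h) monoid" where
  "semidirect_prod N H \<phi> =
     \<lparr>carrier = carrier N \<times> carrier H,
      mult = (\<lambda>(n1, h1) (n2, h2). (n1 \<otimes>\<^bsub>N\<^esub> \<phi> h1 n2, h1 \<otimes>\<^bsub>H\<^esub> h2)),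
      one = (\<one>\<^bsub>N\<^esub>, \<one>\<^bsub>H\<^esub>)\<rparr>"

end

theory Submission
  imports Defs
begin


lemma pos_eq: "distinct L \<Longrightarrow> i < length L \<Longrightarrow> L ! i = a \<Longrightarrow> pos L a = Suc i"
  unfolding pos_def
  apply (rule arg_cong[where f=Suc])
  apply (rule Least_equality)
   apply simp
  using nth_eq_iff_index_eq by fastforce

lemma pi_t_eq: "a \<in> {1..n} \<Longrightarrow> pi_t n a = a"
  unfolding pi_t_def top_row_def
  by (subst pos_eq[where i="a-1"]) (auto simp del: upt_Suc)

definition nb :: "family \<Rightarrow> nat \<Rightarrow> nat set" where
  "nb f a = (case f of
     Tau \<Rightarrow> (if a \<in> {2,3} then {4,5} else if a \<in> {4,5} then {2,3} else {})
   | Sigma \<Rightarrow> (if a \<in> {2,3} then {4,5,6,7} else if a \<in> {4,5,6,7} then {2,3} else {}))"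

definition ob :: "family \<Rightarrow> nat \<Rightarrow> nat \<Rightarrow> bit" where
  "ob f a b = (if a = b \<or> b \<in> nb f a then 0 else 1)"

definition vb :: "family \<Rightarrow> nat \<Rightarrow> nat \<Rightarrow> nat" where
  "vb f n a = (case f of
     Tau \<Rightarrow> (if a \<ge> 6 then n + 1 - a else if a = 1 then n else if a = 2 then n - 3
             else if a = 3 then n - 4 else if a = 4 then n - 1 else n - 2)
   | Sigma \<Rightarrow> (if a \<ge> 8 then n + 1 - a else if a = 1 then n else if a = 2 then n - 5
             else if a = 3 then n - 6 else if a = 4 then n - 1 else if a = 5 then n - 2
             else if a = 6 then n - 3 else n - 4))"

lemma pi_b_Tau: assumes "6 \<le> n" "a \<in> {1..n}" shows "pi_b Tau n a = vb Tau n a"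
proof -
  let ?L = "rev [6..<n+1] @ [3,2,5,4,1]"
  have d: "distinct ?L" by auto
  have len: "length ?L = n" using assms by simp
  have p: "pi_b Tau n a = pos ?L a" by (simp add: pi_b_def bot_row_def)
  have tl: "?L ! (n-5+k) = [3,2,5,4,1] ! k" for k
  proof -
    have "n - 5 = length (rev [6..<n+1])" using assms by simp
    then show ?thesis by (simp only: nth_append_length_plus)
  qed
  show ?thesis
  proof (cases "a \<ge> 6")
    case True
    have r: "rev [6..<n+1] ! (n - a) = a" using assms True by (simp add: rev_nth del: upt_Suc)
    have "?L ! (n - a) = a" using assms True r by (simp add: nth_append del: upt_Suc)
    then show ?thesis unfolding p vb_def
      using pos_eq[OF d, of "n-a" a] assms True by simp
  next
    case False
    then have "a = 1 \<or> a = 2 \<or> a = 3 \<or> a = 4 \<or> a = 5" using assms by auto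
    moreover have "pos ?L (?L ! (n-5+k)) = Suc (n-5+k)" if "k < 5" for k
      by (rule pos_eq[OF d]) (use that assms in auto)
    note q = this[of 0, unfolded tl] this[of 1, unfolded tl] this[of 2, unfolded tl] this[of 3, unfolded tl] this[of 4, unfolded tl]
    ultimately show ?thesis unfolding p vb_def using assms
      by (elim disjE) (simp_all add: q)
  qed
qed

lemma pi_b_Sigma: assumes "8 \<le> n" "a \<in> {1..n}" shows "pi_b Sigma n a = vb Sigma n a"
proof -
  let ?L = "rev [8..<n+1] @ [3,2,7,6,5,4,1]"
  have d: "distinct ?L" by auto
  have len: "length ?L = n" using assms by simp
  have p: "pi_b Sigma n a = pos ?L a" by (simp add: pi_b_def bot_row_def)
  have tl: "?L ! (n-7+k) = [3,2,7,6,5,4,1] ! k" for k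
  proof -
    have "n - 7 = length (rev [8..<n+1])" using assms by simp
    then show ?thesis by (simp only: nth_append_length_plus)
  qed
  show ?thesis
  proof (cases "a \<ge> 8")
    case True
    have r: "rev [8..<n+1] ! (n - a) = a" using assms True by (simp add: rev_nth del: upt_Suc)
    have "?L ! (n - a) = a" using assms True r by (simp add: nth_append del: upt_Suc)
    then show ?thesis unfolding p vb_def
      using pos_eq[OF d, of "n-a" a] assms True by simp
  next
    case False
    then have "a = 1 \<or> a = 2 \<or> a = 3 \<or> a = 4 \<or> a = 5 \<or> a = 6 \<or> a = 7" using assms by auto
    moreover have "pos ?L (?L ! (n-7+k)) = Suc (n-7+k)" if "k < 7" for k
      by (rule pos_eq[OF d]) (use that assms in auto)
    note q = this[of 0, unfolded tl] this[of 1, unfolded tl] this[of 2, unfolded tl] this[of 3, unfolded tl] this[of 4, unfolded tl]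
       this[of 5, unfolded tl] this[of 6, unfolded tl]
    ultimately show ?thesis unfolding p vb_def using assms
      by (elim disjE) (simp_all add: q)
  qed
qed

lemma vb_Tau_iff: assumes "6 \<le> n" "a \<in> {1..n}" "b \<in> {1..n}"
  shows "((a<b \<and> vb Tau n a > vb Tau n b) \<or> (a > b \<and> vb Tau n a < vb Tau n b)) \<longleftrightarrow> (a \<noteq> b \<and> b \<notin> nb Tau a)"
proof -
  have "a \<ge> 6 \<or> a = 1 \<or> a = 2 \<or> a = 3 \<or> a = 4 \<or> a = 5" using assms by auto
  moreover have "b \<ge> 6 \<or> b = 1 \<or> b = 2 \<or> b = 3 \<or> b = 4 \<or> b = 5" using assms by auto
  ultimately show ?thesis using assms unfolding vb_def nb_def
    by (elim disjE) auto
qed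

lemma vb_Sigma_iff: assumes "8 \<le> n" "a \<in> {1..n}" "b \<in> {1..n}"
  shows "((a<b \<and> vb Sigma n a > vb Sigma n b) \<or> (a > b \<and> vb Sigma n a < vb Sigma n b)) \<longleftrightarrow> (a \<noteq> b \<and> b \<notin> nb Sigma a)"
proof -
  have "a \<ge> 8 \<or> a = 1 \<or> a = 2 \<or> a = 3 \<or> a = 4 \<or> a = 5 \<or> a = 6 \<or> a = 7" using assms by auto
  moreover have "b \<ge> 8 \<or> b = 1 \<or> b = 2 \<or> b = 3 \<or> b = 4 \<or> b = 5 \<or> b = 6 \<or> b = 7" using assms by auto
  ultimately show ?thesis using assms unfolding vb_def nb_def
    by (elim disjE) auto
qed

lemma pi_b_eq: "fam_min f \<le> n \<Longrightarrow> a \<in> {1..n} \<Longrightarrow> pi_b f n a = vb f n a"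
  by (cases f) (auto simp: fam_min_def pi_b_Tau pi_b_Sigma)

lemma vb_iff: assumes "fam_min f \<le> n" "a \<in> {1..n}" "b \<in> {1..n}"
  shows "((a<b \<and> vb f n a > vb f n b) \<or> (a > b \<and> vb f n a < vb f n b)) \<longleftrightarrow> (a \<noteq> b \<and> b \<notin> nb f a)"
  using assms vb_Tau_iff vb_Sigma_iff by (cases f) (auto simp: fam_min_def)

lemma Omega_ob: assumes "fam_min f \<le> n" "a \<in> {1..n}" "b \<in> {1..n}"
  shows "(of_int (Omega f n a b) :: bit) = ob f a b"
proof -
  have "(of_int (Omega f n a b) :: bit) =
     (if (a<b \<and> vb f n a > vb f n b) \<or> (a > b \<and> vb f n a < vb f n b) then 1 else 0)"
    unfolding Omega_def using assms by (auto simp: pi_t_eq pi_b_eq)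
  then show ?thesis using vb_iff[OF assms] by (simp add: ob_def)
qed



declare add_bit_eq_xor[simp del] mult_bit_eq_and[simp del]

lemma bit_add_self [simp]: "x + x = (0::bit)" by (cases x) simp_all
lemma bit_mult_self [simp]: "x * x = (x::bit)" by (cases x) simp_all
lemma bit_of_nat_even: "even k \<Longrightarrow> (of_nat k :: bit) = 0"
  by (elim evenE) simp
lemma bit_of_nat_odd: "odd k \<Longrightarrow> (of_nat k :: bit) = 1"
  by (elim oddE) simp

lemma nb_sym: "b \<in> nb f a \<longleftrightarrow> a \<in> nb f b"
  by (cases f) (auto simp: nb_def)

lemma nb_irrefl: "a \<notin> nb f a"
  by (cases f) (auto simp: nb_def)

lemma nb_sub: "fam_min f \<le> n \<Longrightarrow> nb f a \<subseteq> {1..n}"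
  by (cases f) (auto simp: nb_def fam_min_def)

lemma nb_big: "fam_min f \<le> n \<Longrightarrow> n < b \<Longrightarrow> b \<notin> nb f a"
  by (cases f) (auto simp: nb_def fam_min_def)

lemma nb_card: "even (card (nb f a))"
  by (cases f) (auto simp: nb_def)

lemma ob_sym: "ob f a b = ob f b a"
  by (auto simp: ob_def nb_sym)

lemma ob_diag [simp]: "ob f a a = 0"
  by (simp add: ob_def)

lemma ob_split: "ob f a b = 1 + (if b = a then 1 else 0) + (if b \<in> nb f a then 1 else 0)"
  using nb_irrefl[of a f] by (auto simp: ob_def)

definition ones :: "nat \<Rightarrow> nat \<Rightarrow> bit" where
  "ones n i = (if i \<in> {1..n} then 1 else 0)"

definition ev :: "nat \<Rightarrow> nat \<Rightarrow> bit" where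
  "ev i j = (if j = i then 1 else 0)"

definition Bf :: "family \<Rightarrow> nat \<Rightarrow> (nat \<Rightarrow> bit) \<Rightarrow> (nat \<Rightarrow> bit) \<Rightarrow> bit" where
  "Bf f n u v = (\<Sum>a\<in>{1..n}. \<Sum>b\<in>{1..n}. u a * ob f a b * v b)"

definition Qf :: "family \<Rightarrow> nat \<Rightarrow> (nat \<Rightarrow> bit) \<Rightarrow> bit" where
  "Qf f n u = (\<Sum>a\<in>{1..n}. \<Sum>b\<in>{1..n}. if a < b then u a * ob f a b * u b else 0) + (\<Sum>a\<in>{1..n}. u a)"

lemma Qform_eq: "fam_min f \<le> n \<Longrightarrow> Qform f n u = Qf f n u"
  unfolding Qform_def Qf_def
  by (intro arg_cong2[where f="(+)"] sum.cong refl) (auto simp: pi_t_eq Omega_ob)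

lemma OmegaBar_eq: "fam_min f \<le> n \<Longrightarrow> OmegaBar f n a b = (if a \<in> {1..n} \<and> b \<in> {1..n} then ob f a b else 0)"
  unfolding OmegaBar_def by (auto simp: Omega_ob)

lemma sum_pairs:
  fixes X :: "nat \<Rightarrow> nat \<Rightarrow> 'a::comm_monoid_add"
  assumes "finite I" "\<And>a. X a a = 0"
  shows "(\<Sum>a\<in>I. \<Sum>b\<in>I. X a b) = (\<Sum>a\<in>I. \<Sum>b\<in>I. if a < b then X a b + X b a else 0)"
proof -
  have "(\<Sum>a\<in>I. \<Sum>b\<in>I. X a b) = (\<Sum>a\<in>I. \<Sum>b\<in>I. (if a < b then X a b else 0) + (if b < a then X a b else 0))"
    by (intro sum.cong refl) (use assms(2) in \<open>auto dest: not_less_iff_gr_or_eq[THEN iffD1]\<close>)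
  also have "\<dots> = (\<Sum>a\<in>I. \<Sum>b\<in>I. if a < b then X a b else 0) + (\<Sum>a\<in>I. \<Sum>b\<in>I. if b < a then X a b else 0)"
    by (simp add: sum.distrib)
  also have "(\<Sum>a\<in>I. \<Sum>b\<in>I. if b < a then X a b else 0) = (\<Sum>b\<in>I. \<Sum>a\<in>I. if b < a then X a b else 0)"
    by (rule sum.swap)
  also have "(\<Sum>a\<in>I. \<Sum>b\<in>I. if a < b then X a b else 0) + \<dots> = (\<Sum>a\<in>I. \<Sum>b\<in>I. if a < b then X a b + X b a else 0)"
    by (simp add: sum.distrib[symmetric] if_distrib cong: if_cong)
  finally show ?thesis .
qed

lemma Qf_add: "Qf f n (\<lambda>i. u i + v i) = Qf f n u + Qf f n v + Bf f n u v"
proof -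
  have B: "Bf f n u v = (\<Sum>a\<in>{1..n}. \<Sum>b\<in>{1..n}. if a < b then u a * ob f a b * v b + v a * ob f a b * u b else 0)"
    unfolding Bf_def
    apply (subst sum_pairs)
      apply simp_all
    apply (intro sum.cong refl)
    apply (simp add: ob_sym[of f _ ] mult_ac)
    done
  have "(\<Sum>a\<in>{1..n}. \<Sum>b\<in>{1..n}. if a < b then (u a + v a) * ob f a b * (u b + v b) else 0)
     = (\<Sum>a\<in>{1..n}. \<Sum>b\<in>{1..n}. if a < b then u a * ob f a b * u b else 0)
     + (\<Sum>a\<in>{1..n}. \<Sum>b\<in>{1..n}. if a < b then v a * ob f a b * v b else 0)
     + (\<Sum>a\<in>{1..n}. \<Sum>b\<in>{1..n}. if a < b then u a * ob f a b * v b + v a * ob f a b * u b else 0)"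
    unfolding sum.distrib[symmetric] by (intro sum.cong refl) (auto simp: algebra_simps)
  then show ?thesis unfolding Qf_def B by (simp add: sum.distrib algebra_simps)
qed

lemma Bf_sym: "Bf f n u v = Bf f n v u"
  unfolding Bf_def by (subst sum.swap) (simp add: ob_sym mult_ac)

lemma Bf_add1: "Bf f n (\<lambda>i. u i + v i) w = Bf f n u w + Bf f n v w"
  unfolding Bf_def by (simp add: sum.distrib algebra_simps)

lemma Bf_add2: "Bf f n w (\<lambda>i. u i + v i) = Bf f n w u + Bf f n w v"
  unfolding Bf_def by (simp add: sum.distrib algebra_simps)

lemma Bf_smult1: "Bf f n (\<lambda>i. c * u i) w = c * Bf f n u w"
  unfolding Bf_def by (simp add: sum_distrib_left mult_ac)

lemma Qf_smult: "Qf f n (\<lambda>i. c * u i) = c * Qf f n u"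
  by (cases c) (simp_all add: Qf_def cong: if_cong)

lemma ob_rowsum: assumes "fam_min f \<le> k" "a \<in> {1..k}"
  shows "(\<Sum>b\<in>{1..k}. ob f a b) = of_nat k + 1"
proof -
  have "(\<Sum>b\<in>{1..k}. ob f a b) = (\<Sum>b\<in>{1..k}. 1) + (\<Sum>b\<in>{1..k}. if b = a then 1 else 0) + (\<Sum>b\<in>{1..k}. if b \<in> nb f a then 1 else 0)"
    by (simp add: ob_split sum.distrib)
  also have "(\<Sum>b\<in>{1..k}. if b \<in> nb f a then (1::bit) else 0) = (\<Sum>b\<in>{1..k} \<inter> nb f a. 1)"
    by (simp add: sum.inter_restrict[symmetric])
  also have "{1..k} \<inter> nb f a = nb f a" using nb_sub[OF assms(1)] by auto
  also have "(\<Sum>b\<in>nb f a. (1::bit)) = 0" using bit_of_nat_even[OF nb_card] by simp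
  finally show ?thesis using assms by simp
qed

lemma Bf_ones: assumes "fam_min f \<le> n" "odd n"
  shows "Bf f n (ones n) y = 0"
proof -
  have "Bf f n (ones n) y = (\<Sum>b\<in>{1..n}. (\<Sum>a\<in>{1..n}. ob f b a) * y b)"
    unfolding Bf_def ones_def by (subst sum.swap) (simp add: sum_distrib_right ob_sym)
  also have "\<dots> = 0" using assms by (intro sum.neutral ballI) (subst ob_rowsum[OF assms(1)], auto simp: bit_of_nat_odd)
  finally show ?thesis .
qed

lemma Bf_ones2: "fam_min f \<le> n \<Longrightarrow> odd n \<Longrightarrow> Bf f n y (ones n) = 0"
  using Bf_ones Bf_sym by metis



lemma vecsD: "u \<in> vecs n \<Longrightarrow> i \<notin> {1..n} \<Longrightarrow> u i = 0"
  by (simp add: vecs_def)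

lemma vecs_Suc: "u \<in> vecs m \<Longrightarrow> u \<in> vecs (Suc m)"
  by (auto simp: vecs_def)

lemma Qf_restrict: assumes "u \<in> vecs m" shows "Qf f (Suc m) u = Qf f m u"
proof -
  have z: "u (Suc m) = 0" using assms by (simp add: vecs_def)
  show ?thesis unfolding Qf_def using z by (simp add: sum.distrib cong: if_cong)
qed

lemma Bf_restrict: assumes "u \<in> vecs m" "v \<in> vecs m" shows "Bf f (Suc m) u v = Bf f m u v"
proof -
  have z: "u (Suc m) = 0" "v (Suc m) = 0" using assms by (simp_all add: vecs_def)
  show ?thesis unfolding Bf_def using z by (simp add: sum.distrib)
qed

lemma ones_vecs: "ones n \<in> vecs n" by (simp add: ones_def vecs_def)

lemma Qf_ev: assumes "i \<in> {1..n}" shows "Qf f n (ev i) = 1"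
proof -
  have "(\<Sum>a\<in>{1..n}. \<Sum>b\<in>{1..n}. if a < b then ev i a * ob f a b * ev i b else 0) = 0"
    by (intro sum.neutral ballI) (auto simp: ev_def)
  moreover have "(\<Sum>a\<in>{1..n}. ev i a) = 1" using assms by (simp add: ev_def)
  ultimately show ?thesis by (simp add: Qf_def)
qed

lemma Bf_ev2: "b \<in> {1..n} \<Longrightarrow> Bf f n u (ev b) = (\<Sum>a\<in>{1..n}. u a * ob f a b)"
  unfolding Bf_def ev_def by (intro sum.cong refl) (simp add: if_distrib cong: if_cong)

lemma Qf_ones_step: assumes "fam_min f \<le> k"
  shows "Qf f (Suc k) (ones (Suc k)) = Qf f k (ones k) + of_nat (Suc k)"
proof -
  have e: "ones (Suc k) = (\<lambda>i. ones k i + ev (Suc k) i)"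
    by (auto simp: ones_def ev_def)
  have b: "Bf f (Suc k) (ones k) (ev (Suc k)) = of_nat k"
  proof -
    have "Bf f (Suc k) (ones k) (ev (Suc k)) = (\<Sum>a\<in>{1..Suc k}. ones k a * ob f a (Suc k))"
      by (rule Bf_ev2) simp
    also have "\<dots> = (\<Sum>a\<in>{1..k}. 1)"
      using nb_big[OF assms, of "Suc k"] by (auto simp: ones_def ob_def intro!: sum.cong)
    finally show ?thesis by simp
  qed
  show ?thesis unfolding e Qf_add Qf_restrict[OF ones_vecs] b
    by (simp add: Qf_ev)
qed

lemma Qf_ones_Tau: "Qf Tau 6 (ones 6) = 1"
  by (simp add: Qf_def ones_def ob_def nb_def numeral_eq_Suc)

lemma Qf_ones_Sigma: "Qf Sigma 8 (ones 8) = 0"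
  by (simp add: Qf_def ones_def ob_def nb_def numeral_eq_Suc)

lemma tri_step: "(Suc k) * (Suc k + 1) div 2 = k * (k + 1) div 2 + Suc k"
proof -
  have "(Suc k) * (Suc k + 1) = k * (k + 1) + 2 * Suc k" by (simp add: algebra_simps)
  then show ?thesis by simp
qed

lemma Qf_ones: assumes "fam_min f \<le> n" shows "Qf f n (ones n) = of_nat (n * (n + 1) div 2)"
  using assms
proof (induction n rule: dec_induct)
  case base
  then show ?case by (cases f) (simp_all add: fam_min_def Qf_ones_Tau Qf_ones_Sigma)
next
  case (step k)
  then show ?case by (simp only: Qf_ones_step tri_step of_nat_add)
qed

lemma Qf_ones_1: assumes "fam_min f \<le> n" "n mod 4 = 1" shows "Qf f n (ones n) = 1"
proof -
  obtain q where q: "n = 4 * q + 1" using assms(2) by (metis div_mult_mod_eq mult.commute)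
  have "n * (n + 1) div 2 = (4 * q + 1) * (2 * q + 1)" unfolding q by (simp add: algebra_simps)
  moreover have "odd ((4 * q + 1) * (2 * q + 1))" by simp
  ultimately show ?thesis using Qf_ones[OF assms(1)] bit_of_nat_odd by simp
qed

lemma Qf_ones_3: assumes "fam_min f \<le> n" "n mod 4 = 3" shows "Qf f n (ones n) = 0"
proof -
  obtain q where q: "n = 4 * q + 3" using assms(2) by (metis div_mult_mod_eq mult.commute)
  have "n * (n + 1) div 2 = (4 * q + 3) * (2 * q + 2)" unfolding q by (simp add: algebra_simps)
  moreover have "even ((4 * q + 3) * (2 * q + 2))" by simp
  ultimately show ?thesis using Qf_ones[OF assms(1)] bit_of_nat_even by simp
qed

lemma bit_eq_from_sum: "0 = x + y \<Longrightarrow> x = (y::bit)" by (cases x; cases y) simp_all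

lemma nondeg: assumes "fam_min f \<le> m" "even m" "v \<in> vecs m" "\<And>y. y \<in> vecs m \<Longrightarrow> Bf f m v y = 0"
  shows "v = (\<lambda>i. 0)"
proof -
  have s: "(\<Sum>a\<in>{1..m}. v a) = 0"
  proof -
    have "Bf f m v (ones m) = (\<Sum>a\<in>{1..m}. v a * (\<Sum>b\<in>{1..m}. ob f a b))"
      unfolding Bf_def ones_def by (simp add: sum_distrib_left)
    also have "\<dots> = (\<Sum>a\<in>{1..m}. v a)"
      by (intro sum.cong refl) (subst ob_rowsum[OF assms(1)], auto simp: bit_of_nat_even assms(2))
    finally show ?thesis using assms(4)[OF ones_vecs] by simp
  qed
  have eq: "v b = (\<Sum>a\<in>nb f b. v a)" if b: "b \<in> {1..m}" for b
  proof -
    have ev: "ev b \<in> vecs m" using b by (auto simp: ev_def vecs_def)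
    have "0 = (\<Sum>a\<in>{1..m}. v a * ob f a b)" using assms(4)[OF ev] Bf_ev2[OF b] by simp
    also have "\<dots> = (\<Sum>a\<in>{1..m}. v a) + (\<Sum>a\<in>{1..m}. if a = b then v a else 0)
        + (\<Sum>a\<in>{1..m}. if a \<in> nb f b then v a else 0)"
    proof -
      have "v a * ob f a b = v a + (if a = b then v a else 0) + (if a \<in> nb f b then v a else 0)" for a
        unfolding ob_split using nb_sym[of b f a] by (simp add: algebra_simps)
      then show ?thesis by (simp add: sum.distrib)
    qed
    also have "(\<Sum>a\<in>{1..m}. if a \<in> nb f b then v a else 0) = (\<Sum>a\<in>{1..m} \<inter> nb f b. v a)"
      by (simp add: sum.inter_restrict)
    also have "{1..m} \<inter> nb f b = nb f b" using nb_sub[OF assms(1)] by auto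
    finally have "0 = v b + (\<Sum>a\<in>nb f b. v a)" using s b by simp
    then show ?thesis by (rule bit_eq_from_sum)
  qed
  show ?thesis
  proof (cases f)
    case Tau
    have m: "6 \<le> m" using assms(1) Tau by (simp add: fam_min_def)
    have e2: "v 2 = v 4 + v 5" using eq[of 2] m Tau by (simp add: nb_def)
    have e3: "v 3 = v 4 + v 5" using eq[of 3] m Tau by (simp add: nb_def)
    have e4: "v 4 = v 2 + v 3" using eq[of 4] m Tau by (simp add: nb_def)
    have e5: "v 5 = v 2 + v 3" using eq[of 5] m Tau by (simp add: nb_def)
    have z: "v 2 = 0 \<and> v 3 = 0 \<and> v 4 = 0 \<and> v 5 = 0"
    proof -
      have a: "v 3 = v 2" using e2 e3 by simp
      have b: "v 4 = 0" "v 5 = 0" using e4 e5 unfolding a by simp_all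
      then show ?thesis using e2 unfolding a by simp
    qed
    show ?thesis
    proof
      fix i
      show "v i = 0"
      proof (cases "i \<in> {1..m}")
        case True
        show ?thesis
        proof (cases "i \<in> {2,3,4,5}")
          case True then show ?thesis using z by auto
        next
          case False
          then show ?thesis using eq[OF \<open>i \<in> {1..m}\<close>] Tau by (simp add: nb_def)
        qed
      next
        case False then show ?thesis using assms(3) by (simp add: vecs_def)
      qed
    qed
  next
    case Sigma
    have m: "8 \<le> m" using assms(1) Sigma by (simp add: fam_min_def)
    have e2: "v 2 = v 4 + (v 5 + (v 6 + v 7))" using eq[of 2] m Sigma by (simp add: nb_def)
    have e3: "v 3 = v 4 + (v 5 + (v 6 + v 7))" using eq[of 3] m Sigma by (simp add: nb_def)
    have e4: "v 4 = v 2 + v 3" using eq[of 4] m Sigma by (simp add: nb_def)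
    have e5: "v 5 = v 2 + v 3" using eq[of 5] m Sigma by (simp add: nb_def)
    have e6: "v 6 = v 2 + v 3" using eq[of 6] m Sigma by (simp add: nb_def)
    have e7: "v 7 = v 2 + v 3" using eq[of 7] m Sigma by (simp add: nb_def)
    have z: "v 2 = 0 \<and> v 3 = 0 \<and> v 4 = 0 \<and> v 5 = 0 \<and> v 6 = 0 \<and> v 7 = 0"
    proof -
      have a: "v 3 = v 2" using e2 e3 by simp
      have b: "v 4 = 0" "v 5 = 0" "v 6 = 0" "v 7 = 0" using e4 e5 e6 e7 unfolding a by simp_all
      then show ?thesis using e2 unfolding a by simp
    qed
    show ?thesis
    proof
      fix i
      show "v i = 0"
      proof (cases "i \<in> {1..m}")
        case True
        show ?thesis
        proof (cases "i \<in> {2,3,4,5,6,7}")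
          case True then show ?thesis using z by auto
        next
          case False
          then show ?thesis using eq[OF \<open>i \<in> {1..m}\<close>] Sigma by (simp add: nb_def)
        qed
      next
        case False then show ?thesis using assms(3) by (simp add: vecs_def)
      qed
    qed
  qed
qed



lemma vec_mat_mult: "vec_mat n u (mat_mult n A B) = vec_mat n (vec_mat n u A) B"
  unfolding vec_mat_def mat_mult_def
  by (rule ext) (simp add: sum_distrib_left sum_distrib_right mult_ac, rule sum.swap)

lemma vec_mat_vecs: "A \<in> mats n \<Longrightarrow> vec_mat n u A \<in> vecs n"
  by (auto simp: vec_mat_def mats_def vecs_def)

lemma ev_vecs: "i \<in> {1..n} \<Longrightarrow> ev i \<in> vecs n"
  by (auto simp: ev_def vecs_def)

lemma ite_mult: "(if P then 1 else 0) * x = (if P then x else (0::bit))" by simp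
lemma mult_ite: "x * (if P then 1 else 0) = (if P then x else (0::bit))" by simp

lemma vec_mat_ev: "i \<in> {1..n} \<Longrightarrow> vec_mat n (ev i) A = (\<lambda>j. A i j)"
  unfolding vec_mat_def ev_def by (rule ext) (simp add: ite_mult)

lemma mat_eqI: assumes "A \<in> mats n" "B \<in> mats n" "\<And>u. u \<in> vecs n \<Longrightarrow> vec_mat n u A = vec_mat n u B"
  shows "A = B"
proof (intro ext)
  fix i j
  show "A i j = B i j"
  proof (cases "i \<in> {1..n}")
    case True
    then show ?thesis using assms(3)[OF ev_vecs[OF True]] vec_mat_ev[OF True] by metis
  next
    case False
    then show ?thesis using assms(1,2) by (simp add: mats_def)
  qed
qed

lemma vec_mat_id: "u \<in> vecs n \<Longrightarrow> vec_mat n u (mat_id n) = u"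
  unfolding vec_mat_def mat_id_def vecs_def
  by (rule ext) (auto simp: if_distrib cong: if_cong)

lemma vec_mat_add: "vec_mat n (\<lambda>i. u i + v i) A = (\<lambda>j. vec_mat n u A j + vec_mat n v A j)"
  unfolding vec_mat_def by (simp add: sum.distrib algebra_simps)

lemma vec_mat_smult: "vec_mat n (\<lambda>i. c * u i) A = (\<lambda>j. c * vec_mat n u A j)"
  unfolding vec_mat_def by (simp add: sum_distrib_left mult_ac)

lemma vec_mat_zero: "vec_mat n (\<lambda>i. 0) A = (\<lambda>j. 0)"
  unfolding vec_mat_def by simp

lemma mat_mult_mats: "A \<in> mats n \<Longrightarrow> B \<in> mats n \<Longrightarrow> mat_mult n A B \<in> mats n"
  by (auto simp: mat_mult_def mats_def)

lemma mat_id_mats: "mat_id n \<in> mats n"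
  by (auto simp: mat_id_def mats_def)

lemma finite_vecs: "finite (vecs n)"
proof -
  have "vecs n \<subseteq> (\<lambda>S i. if i \<in> S then 1 else 0) ` Pow {1..n}"
  proof
    fix u assume u: "u \<in> vecs n"
    have "u = (\<lambda>i. if i \<in> {i\<in>{1..n}. u i = 1} then 1 else 0)"
      using u by (auto simp: vecs_def fun_eq_iff)
    then show "u \<in> (\<lambda>S i. if i \<in> S then 1 else 0) ` Pow {1..n}" by blast
  qed
  then show ?thesis by (rule finite_subset) simp
qed

lemma add_vecs: "u \<in> vecs n \<Longrightarrow> v \<in> vecs n \<Longrightarrow> (\<lambda>i. u i + v i) \<in> vecs n"
  by (auto simp: vecs_def)

lemma smult_vecs: "u \<in> vecs n \<Longrightarrow> (\<lambda>i. c * u i) \<in> vecs n"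
  by (auto simp: vecs_def)

lemma bit_diff_zero: "(\<lambda>i. u i + v i) = (\<lambda>i. (0::bit)) \<Longrightarrow> u = v"
proof (rule ext)
  fix i assume "(\<lambda>i. u i + v i) = (\<lambda>i. (0::bit))"
  then have "u i + v i = 0" by metis
  then show "u i = v i" by (cases "u i"; cases "v i") simp_all
qed

lemma invertibleI:
  assumes A: "A \<in> mats n" and ker: "\<And>u. u \<in> vecs n \<Longrightarrow> vec_mat n u A = (\<lambda>j. 0) \<Longrightarrow> u = (\<lambda>j. 0)"
  shows "mat_invertible n A"
proof -
  let ?F = "\<lambda>u. vec_mat n u A"
  have inj: "inj_on ?F (vecs n)"
  proof (rule inj_onI)
    fix u v assume u: "u \<in> vecs n" and v: "v \<in> vecs n" and e: "?F u = ?F v"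
    have "?F (\<lambda>i. u i + v i) = (\<lambda>j. 0)" unfolding vec_mat_add e by simp
    then have "(\<lambda>i. u i + v i) = (\<lambda>j. 0)" using ker add_vecs[OF u v] by blast
    then show "u = v" by (rule bit_diff_zero)
  qed
  have sub: "?F ` vecs n \<subseteq> vecs n" using vec_mat_vecs[OF A] by blast
  have surj: "?F ` vecs n = vecs n" using endo_inj_surj[OF finite_vecs sub inj] .
  have ex: "\<exists>w. w \<in> vecs n \<and> ?F w = ev i" if "i \<in> {1..n}" for i
    using ev_vecs[OF that] surj by (metis imageE)
  define g where "g i = (SOME w. w \<in> vecs n \<and> ?F w = ev i)" for i
  have g: "g i \<in> vecs n \<and> ?F (g i) = ev i" if "i \<in> {1..n}" for i
    unfolding g_def using someI_ex[OF ex[OF that]] .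
  define B where "B = (\<lambda>i j. if i \<in> {1..n} then g i j else 0)"
  have B: "B \<in> mats n" using g by (auto simp: B_def mats_def vecs_def)
  have BA: "mat_mult n B A = mat_id n"
  proof (intro ext)
    fix i j
    show "mat_mult n B A i j = mat_id n i j"
    proof (cases "i \<in> {1..n}")
      case True
      have "mat_mult n B A i j = ?F (g i) j" unfolding mat_mult_def vec_mat_def B_def using True by simp
      also have "\<dots> = ev i j" using g[OF True] by simp
      finally show ?thesis using True by (auto simp: ev_def mat_id_def)
    next
      case False then show ?thesis by (auto simp: mat_mult_def mat_id_def B_def)
    qed
  qed
  have AB: "mat_mult n A B = mat_id n"
  proof (rule mat_eqI[OF mat_mult_mats[OF A B] mat_id_mats])
    fix u assume u: "u \<in> vecs n"
    have "?F (vec_mat n u (mat_mult n A B)) = ?F u"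
      unfolding vec_mat_mult vec_mat_mult[symmetric, of n "vec_mat n u A" B A] BA
      using vec_mat_id[OF vec_mat_vecs[OF A]] by simp
    then have "vec_mat n u (mat_mult n A B) = u"
      using inj u vec_mat_vecs[OF mat_mult_mats[OF A B]] by (meson inj_onD)
    then show "vec_mat n u (mat_mult n A B) = vec_mat n u (mat_id n)" using vec_mat_id[OF u] by simp
  qed
  show ?thesis unfolding mat_invertible_def using B AB BA by blast
qed



lemma O_carrier: "fam_min f \<le> k \<Longrightarrow> M \<in> carrier (O_group f k) \<longleftrightarrow>
   M \<in> mats k \<and> mat_invertible k M \<and> (\<forall>u\<in>vecs k. Qf f k (vec_mat k u M) = Qf f k u)"
  by (simp add: O_group_def Qform_eq)

lemma O_inv: assumes k: "fam_min f \<le> k" and M: "M \<in> carrier (O_group f k)"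
  shows "\<exists>M'\<in>carrier (O_group f k). mat_mult k M M' = mat_id k \<and> mat_mult k M' M = mat_id k"
proof -
  have Mm: "M \<in> mats k" and Mi: "mat_invertible k M" and MQ: "\<forall>u\<in>vecs k. Qf f k (vec_mat k u M) = Qf f k u"
    using M O_carrier[OF k] by auto
  obtain B where B: "B \<in> mats k" "mat_mult k M B = mat_id k" "mat_mult k B M = mat_id k"
    using Mi unfolding mat_invertible_def by blast
  have Bi: "mat_invertible k B" unfolding mat_invertible_def using Mm B by blast
  have "Qf f k (vec_mat k u B) = Qf f k u" if u: "u \<in> vecs k" for u
  proof -
    have "Qf f k (vec_mat k u B) = Qf f k (vec_mat k (vec_mat k u B) M)"
      using MQ vec_mat_vecs[OF B(1)] by simp
    also have "vec_mat k (vec_mat k u B) M = u"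
      unfolding vec_mat_mult[symmetric] B(3) using vec_mat_id[OF u] .
    finally show ?thesis .
  qed
  then have "B \<in> carrier (O_group f k)" using O_carrier[OF k] B Bi by auto
  then show ?thesis using B by blast
qed

lemma O_Bf: assumes k: "fam_min f \<le> k" and M: "M \<in> carrier (O_group f k)" and u: "u \<in> vecs k" and v: "v \<in> vecs k"
  shows "Bf f k (vec_mat k u M) (vec_mat k v M) = Bf f k u v"
proof -
  have MQ: "\<And>w. w \<in> vecs k \<Longrightarrow> Qf f k (vec_mat k w M) = Qf f k w" using M O_carrier[OF k] by auto
  have "Qf f k (vec_mat k (\<lambda>i. u i + v i) M) = Qf f k (\<lambda>i. u i + v i)" using MQ add_vecs[OF u v] .
  then have "Qf f k (vec_mat k u M) + Qf f k (vec_mat k v M) + Bf f k (vec_mat k u M) (vec_mat k v M)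
      = Qf f k u + Qf f k v + Bf f k u v"
    unfolding vec_mat_add Qf_add by simp
  then show ?thesis using MQ[OF u] MQ[OF v] by simp
qed

lemma O_inj: assumes k: "fam_min f \<le> k" and M: "M \<in> carrier (O_group f k)" and u: "u \<in> vecs k" and v: "v \<in> vecs k"
  and e: "vec_mat k u M = vec_mat k v M"
  shows "u = v"
proof -
  obtain B where B: "mat_mult k M B = mat_id k"
    using M O_carrier[OF k] unfolding mat_invertible_def by blast
  have "vec_mat k u (mat_mult k M B) = vec_mat k v (mat_mult k M B)"
    unfolding vec_mat_mult e ..
  then show ?thesis unfolding B using vec_mat_id u v by metis
qed

lemma O_mats: "fam_min f \<le> k \<Longrightarrow> M \<in> carrier (O_group f k) \<Longrightarrow> M \<in> mats k"
  using O_carrier by blast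

lemma O_Q: "fam_min f \<le> k \<Longrightarrow> M \<in> carrier (O_group f k) \<Longrightarrow> u \<in> vecs k \<Longrightarrow> Qf f k (vec_mat k u M) = Qf f k u"
  using O_carrier by blast

lemma O_surj: assumes k: "fam_min f \<le> k" and M: "M \<in> carrier (O_group f k)" and y: "y \<in> vecs k"
  shows "\<exists>x\<in>vecs k. vec_mat k x M = y"
proof -
  obtain M' where M': "M' \<in> carrier (O_group f k)" "mat_mult k M' M = mat_id k"
    using O_inv[OF k M] by blast
  have "vec_mat k (vec_mat k y M') M = y" unfolding vec_mat_mult[symmetric] M'(2) using vec_mat_id[OF y] .
  then show ?thesis using vec_mat_vecs[OF O_mats[OF k M'(1)]] by blast
qed



definition pr :: "nat \<Rightarrow> (nat \<Rightarrow> bit) \<Rightarrow> (nat \<Rightarrow> bit)" where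
  "pr m u = (\<lambda>i. if i \<in> {1..m} then u i + u (Suc m) else 0)"

definition Phi :: "nat \<Rightarrow> (nat \<Rightarrow> nat \<Rightarrow> bit) \<Rightarrow> (nat \<Rightarrow> nat \<Rightarrow> bit)" where
  "Phi m M = (\<lambda>i j. if i \<in> {1..m} \<and> j \<in> {1..m} then M i j + M i (Suc m) else 0)"

lemma pr_vecs: "pr m u \<in> vecs m" by (simp add: pr_def vecs_def)

lemma pr_decomp: "u \<in> vecs (Suc m) \<Longrightarrow> u = (\<lambda>i. pr m u i + u (Suc m) * ones (Suc m) i)"
  by (rule ext) (auto simp: pr_def ones_def vecs_def algebra_simps le_Suc_eq)

lemma pr_id: "w \<in> vecs m \<Longrightarrow> pr m w = w"
  by (rule ext) (auto simp: pr_def vecs_def)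

lemma pr_add_ones: "pr m (\<lambda>i. v i + a * ones (Suc m) i) = pr m v"
  by (rule ext) (auto simp: pr_def ones_def algebra_simps)

lemma pr_add: "pr m (\<lambda>i. u i + v i) = (\<lambda>i. pr m u i + pr m v i)"
  by (rule ext) (auto simp: pr_def algebra_simps)

lemma Phi_mats: "Phi m M \<in> mats m" by (simp add: Phi_def mats_def)

lemma Phi_act: assumes "x \<in> vecs m" shows "vec_mat m x (Phi m M) = pr m (vec_mat (Suc m) x M)"
proof (rule ext)
  fix j
  have z: "x (Suc m) = 0" using assms by (simp add: vecs_def)
  show "vec_mat m x (Phi m M) j = pr m (vec_mat (Suc m) x M) j"
    unfolding vec_mat_def Phi_def pr_def using z
    by (auto simp: sum.distrib algebra_simps)
qed

lemma Phi_id: "Phi m (mat_id (Suc m)) = mat_id m"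
  by (auto simp: Phi_def mat_id_def fun_eq_iff)

locale stp =
  fixes f :: family and m :: nat
  assumes fm: "fam_min f \<le> m" and evm: "even m"
begin

lemma fn: "fam_min f \<le> Suc m" using fm by simp
lemma oddn: "odd (Suc m)" using evm by simp

lemma Qf_plus_ones: "Qf f (Suc m) (\<lambda>i. v i + a * ones (Suc m) i) = Qf f (Suc m) v + a * Qf f (Suc m) (ones (Suc m))"
proof -
  have "Bf f (Suc m) v (\<lambda>i. a * ones (Suc m) i) = Bf f (Suc m) (\<lambda>i. a * ones (Suc m) i) v" by (rule Bf_sym)
  also have "\<dots> = 0" unfolding Bf_smult1 Bf_ones[OF fn oddn] by simp
  finally have "Bf f (Suc m) v (\<lambda>i. a * ones (Suc m) i) = 0" .
  then show ?thesis unfolding Qf_add Qf_smult by simp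
qed

lemma Bf_plus_ones: "Bf f (Suc m) (\<lambda>i. v i + a * ones (Suc m) i) (\<lambda>i. w i + b * ones (Suc m) i) = Bf f (Suc m) v w"
proof -
  have 1: "Bf f (Suc m) (\<lambda>i. c * ones (Suc m) i) y = 0" for c y
    unfolding Bf_smult1 Bf_ones[OF fn oddn] by simp
  have 2: "Bf f (Suc m) y (\<lambda>i. b * ones (Suc m) i) = 0" for y
    using Bf_sym[of f "Suc m" y "\<lambda>i. b * ones (Suc m) i"] 1[of b y] by simp
  show ?thesis unfolding Bf_add1 Bf_add2 1 2 by simp
qed

lemma radical: assumes u: "u \<in> vecs (Suc m)" and r: "\<And>y. y \<in> vecs (Suc m) \<Longrightarrow> Bf f (Suc m) u y = 0"
  shows "u = (\<lambda>i. 0) \<or> u = ones (Suc m)"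
proof -
  have "Bf f m (pr m u) y = 0" if y: "y \<in> vecs m" for y
  proof -
    have "0 = Bf f (Suc m) u y" using r vecs_Suc[OF y] by simp
    also have "\<dots> = Bf f (Suc m) (\<lambda>i. pr m u i + u (Suc m) * ones (Suc m) i) (\<lambda>i. y i + 0 * ones (Suc m) i)"
      using pr_decomp[OF u] by simp
    also have "\<dots> = Bf f (Suc m) (pr m u) y" by (rule Bf_plus_ones)
    also have "\<dots> = Bf f m (pr m u) y" by (rule Bf_restrict[OF pr_vecs y])
    finally show ?thesis by simp
  qed
  then have "pr m u = (\<lambda>i. 0)" using nondeg[OF fm evm pr_vecs] by blast
  then have "u = (\<lambda>i. u (Suc m) * ones (Suc m) i)" using pr_decomp[OF u] by simp
  then show ?thesis by (cases "u (Suc m)") auto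
qed

lemma ones_fixed: assumes M: "M \<in> carrier (O_group f (Suc m))"
  shows "vec_mat (Suc m) (ones (Suc m)) M = ones (Suc m)"
proof -
  let ?w = "vec_mat (Suc m) (ones (Suc m)) M"
  have w: "?w \<in> vecs (Suc m)" using vec_mat_vecs[OF O_mats[OF fn M]] .
  have "Bf f (Suc m) ?w y = 0" if y: "y \<in> vecs (Suc m)" for y
  proof -
    obtain x where x: "x \<in> vecs (Suc m)" "vec_mat (Suc m) x M = y" using O_surj[OF fn M y] by blast
    have "Bf f (Suc m) ?w y = Bf f (Suc m) (ones (Suc m)) x"
      unfolding x(2)[symmetric] by (rule O_Bf[OF fn M ones_vecs x(1)])
    also have "\<dots> = 0" by (rule Bf_ones[OF fn oddn])
    finally show ?thesis .
  qed
  then have "?w = (\<lambda>i. 0) \<or> ?w = ones (Suc m)" using radical[OF w] by blast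
  moreover have "?w \<noteq> (\<lambda>i. 0)"
  proof
    assume "?w = (\<lambda>i. 0)"
    then have "vec_mat (Suc m) (ones (Suc m)) M = vec_mat (Suc m) (\<lambda>i. 0) M" using vec_mat_zero by metis
    then have "ones (Suc m) = (\<lambda>i. 0)" using O_inj[OF fn M ones_vecs] by (simp add: vecs_def)
    then have "ones (Suc m) 1 = 0" by metis
    then show False by (simp add: ones_def)
  qed
  ultimately show ?thesis by blast
qed

lemma Phi_mult: assumes M: "M \<in> carrier (O_group f (Suc m))" and N: "N \<in> carrier (O_group f (Suc m))"
  shows "Phi m (mat_mult (Suc m) M N) = mat_mult m (Phi m M) (Phi m N)"
proof (rule mat_eqI[OF Phi_mats mat_mult_mats[OF Phi_mats Phi_mats]])
  fix x assume x: "x \<in> vecs m"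
  let ?u = "vec_mat (Suc m) x M"
  have u: "?u \<in> vecs (Suc m)" using vec_mat_vecs[OF O_mats[OF fn M]] .
  have "vec_mat m x (mat_mult m (Phi m M) (Phi m N)) = pr m (vec_mat (Suc m) (pr m ?u) N)"
    unfolding vec_mat_mult Phi_act[OF x] Phi_act[OF pr_vecs] ..
  also have "vec_mat (Suc m) (pr m ?u) N = vec_mat (Suc m) (\<lambda>i. ?u i + ?u (Suc m) * ones (Suc m) i) N"
  proof -
    have "pr m ?u = (\<lambda>i. ?u i + ?u (Suc m) * ones (Suc m) i)"
    proof (rule ext)
      fix i
      have "?u i = pr m ?u i + ?u (Suc m) * ones (Suc m) i" using fun_cong[OF pr_decomp[OF u], of i] .
      then show "pr m ?u i = ?u i + ?u (Suc m) * ones (Suc m) i" by (simp add: algebra_simps)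
    qed
    then show ?thesis by simp
  qed
  also have "\<dots> = (\<lambda>j. vec_mat (Suc m) ?u N j + ?u (Suc m) * ones (Suc m) j)"
    unfolding vec_mat_add vec_mat_smult ones_fixed[OF N] ..
  also have "pr m \<dots> = pr m (vec_mat (Suc m) ?u N)" by (rule pr_add_ones)
  also have "\<dots> = vec_mat m x (Phi m (mat_mult (Suc m) M N))"
    unfolding Phi_act[OF x] vec_mat_mult ..
  finally show "vec_mat m x (Phi m (mat_mult (Suc m) M N)) = vec_mat m x (mat_mult m (Phi m M) (Phi m N))" by simp
qed

lemma Phi_invertible: assumes M: "M \<in> carrier (O_group f (Suc m))" shows "mat_invertible m (Phi m M)"
proof -
  obtain M' where M': "M' \<in> carrier (O_group f (Suc m))" "mat_mult (Suc m) M M' = mat_id (Suc m)"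
    "mat_mult (Suc m) M' M = mat_id (Suc m)"
    using O_inv[OF fn M] by blast
  have "mat_mult m (Phi m M) (Phi m M') = mat_id m" "mat_mult m (Phi m M') (Phi m M) = mat_id m"
    using Phi_mult[OF M M'(1)] Phi_mult[OF M'(1) M] M'(2,3) Phi_id by simp_all
  then show ?thesis unfolding mat_invertible_def using Phi_mats by blast
qed

lemma Bf_Phi: assumes M: "M \<in> carrier (O_group f (Suc m))" and x: "x \<in> vecs m" and y: "y \<in> vecs m"
  shows "Bf f m (vec_mat m x (Phi m M)) (vec_mat m y (Phi m M)) = Bf f m x y"
proof -
  let ?u = "vec_mat (Suc m) x M" and ?v = "vec_mat (Suc m) y M"
  have u: "?u \<in> vecs (Suc m)" and v: "?v \<in> vecs (Suc m)" using vec_mat_vecs[OF O_mats[OF fn M]] by auto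
  have "Bf f m (vec_mat m x (Phi m M)) (vec_mat m y (Phi m M)) = Bf f m (pr m ?u) (pr m ?v)"
    unfolding Phi_act[OF x] Phi_act[OF y] ..
  also have "\<dots> = Bf f (Suc m) (pr m ?u) (pr m ?v)" using Bf_restrict[OF pr_vecs pr_vecs] by simp
  also have "\<dots> = Bf f (Suc m) (\<lambda>i. pr m ?u i + ?u (Suc m) * ones (Suc m) i) (\<lambda>i. pr m ?v i + ?v (Suc m) * ones (Suc m) i)"
    by (rule Bf_plus_ones[symmetric])
  also have "\<dots> = Bf f (Suc m) ?u ?v" using pr_decomp[OF u, symmetric] pr_decomp[OF v, symmetric] by simp
  also have "\<dots> = Bf f (Suc m) x y" by (rule O_Bf[OF fn M vecs_Suc[OF x] vecs_Suc[OF y]])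
  also have "\<dots> = Bf f m x y" by (rule Bf_restrict[OF x y])
  finally show ?thesis .
qed

lemma Q_Phi: assumes M: "M \<in> carrier (O_group f (Suc m))" and x: "x \<in> vecs m"
  shows "Qf f m (vec_mat m x (Phi m M)) + vec_mat (Suc m) x M (Suc m) * Qf f (Suc m) (ones (Suc m)) = Qf f m x"
proof -
  let ?u = "vec_mat (Suc m) x M"
  have u: "?u \<in> vecs (Suc m)" using vec_mat_vecs[OF O_mats[OF fn M]] .
  have "Qf f m x = Qf f (Suc m) x" using Qf_restrict[OF x] by simp
  also have "\<dots> = Qf f (Suc m) ?u" using O_Q[OF fn M vecs_Suc[OF x]] by simp
  also have "\<dots> = Qf f (Suc m) (\<lambda>i. pr m ?u i + ?u (Suc m) * ones (Suc m) i)" using pr_decomp[OF u] by simp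
  also have "\<dots> = Qf f (Suc m) (pr m ?u) + ?u (Suc m) * Qf f (Suc m) (ones (Suc m))" by (rule Qf_plus_ones)
  also have "Qf f (Suc m) (pr m ?u) = Qf f m (vec_mat m x (Phi m M))"
    unfolding Phi_act[OF x] by (rule Qf_restrict[OF pr_vecs])
  finally show ?thesis by simp
qed

lemma Phi_eqD: assumes M: "M \<in> carrier (O_group f (Suc m))" and N: "N \<in> carrier (O_group f (Suc m))"
  and e: "Phi m M = Phi m N" and c: "\<And>i. i \<in> {1..m} \<Longrightarrow> M i (Suc m) = N i (Suc m)"
  shows "M = N"
proof (intro ext)
  fix i j
  have top: "M i j = N i j" if i: "i \<in> {1..m}" for i
  proof (cases "j \<in> {1..m}")
    case True
    have "M i j + M i (Suc m) = N i j + N i (Suc m)" using fun_cong[OF fun_cong[OF e, of i], of j] i True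
      by (simp add: Phi_def)
    then show ?thesis using c[OF i] by simp
  next
    case False
    then show ?thesis
    proof (cases "j = Suc m")
      case True then show ?thesis using c[OF i] by simp
    next
      case False
      then have "j \<notin> {1..Suc m}" using \<open>j \<notin> {1..m}\<close> by auto
      then show ?thesis using O_mats[OF fn M] O_mats[OF fn N] by (simp add: mats_def)
    qed
  qed
  show "M i j = N i j"
  proof (cases "i \<in> {1..m}")
    case True then show ?thesis by (rule top)
  next
    case False
    show ?thesis
    proof (cases "i = Suc m")
      case True
      have vo: "vec_mat (Suc m) (ones (Suc m)) K j = (\<Sum>k\<in>{1..Suc m}. K k j)" for K
        unfolding vec_mat_def ones_def by (intro sum.cong) auto
      have sM: "(\<Sum>k\<in>{1..Suc m}. M k j) = ones (Suc m) j"
        using fun_cong[OF ones_fixed[OF M], of j] vo[of M] by simp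
      have sN: "(\<Sum>k\<in>{1..Suc m}. N k j) = ones (Suc m) j"
        using fun_cong[OF ones_fixed[OF N], of j] vo[of N] by simp
      have "(\<Sum>k\<in>{1..m}. M k j) = (\<Sum>k\<in>{1..m}. N k j)" using top by (intro sum.cong) auto
      then have "(\<Sum>k\<in>{1..m}. N k j) + M (Suc m) j = (\<Sum>k\<in>{1..m}. N k j) + N (Suc m) j"
        using sM sN by simp
      then have "M (Suc m) j = N (Suc m) j" by (rule add_left_imp_eq)
      then show ?thesis using True by simp
    next
      case False
      then have "i \<notin> {1..Suc m}" using \<open>i \<notin> {1..m}\<close> by auto
      then show ?thesis using O_mats[OF fn M] O_mats[OF fn N] by (simp add: mats_def)
    qed
  qed
qed

end



definition lift :: "nat \<Rightarrow> (nat \<Rightarrow> nat \<Rightarrow> bit) \<Rightarrow> (nat \<Rightarrow> bit) \<Rightarrow> (nat \<Rightarrow> nat \<Rightarrow> bit)" where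
  "lift m S c = (\<lambda>i j. if i \<in> {1..m} then (if j \<in> {1..m} then S i j + c i else if j = Suc m then c i else 0)
     else if i = Suc m then (if j \<in> {1..m} then 1 + (\<Sum>k\<in>{1..m}. S k j + c k)
        else if j = Suc m then 1 + (\<Sum>k\<in>{1..m}. c k) else 0) else 0)"

lemma lift_mats: "lift m S c \<in> mats (Suc m)"
  by (auto simp: lift_def mats_def)

lemma lift_col: "i \<in> {1..m} \<Longrightarrow> lift m S c i (Suc m) = c i"
  by (simp add: lift_def)

lemma Phi_lift: "S \<in> mats m \<Longrightarrow> Phi m (lift m S c) = S"
  by (auto simp: Phi_def lift_def fun_eq_iff mats_def)

lemma lift_act: assumes S: "S \<in> mats m"
  shows "vec_mat (Suc m) u (lift m S c) =
    (\<lambda>j. vec_mat m (pr m u) S j + ((\<Sum>i\<in>{1..m}. pr m u i * c i) + u (Suc m)) * ones (Suc m) j)"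
proof (rule ext)
  fix j
  have L: "vec_mat (Suc m) u (lift m S c) j = (\<Sum>i\<in>{1..m}. u i * lift m S c i j) + u (Suc m) * lift m S c (Suc m) j"
    by (simp add: vec_mat_def)
  have P: "(\<Sum>i\<in>{1..m}. pr m u i * X i) = (\<Sum>i\<in>{1..m}. u i * X i) + u (Suc m) * (\<Sum>i\<in>{1..m}. X i)" for X
    by (simp add: pr_def sum.distrib sum_distrib_left algebra_simps)
  have V: "vec_mat m (pr m u) S j = (\<Sum>i\<in>{1..m}. pr m u i * S i j)" by (simp add: vec_mat_def)
  show "vec_mat (Suc m) u (lift m S c) j =
    vec_mat m (pr m u) S j + ((\<Sum>i\<in>{1..m}. pr m u i * c i) + u (Suc m)) * ones (Suc m) j"
  proof (cases "j \<in> {1..m}")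
    case True
    have "(\<Sum>i\<in>{1..m}. u i * lift m S c i j) = (\<Sum>i\<in>{1..m}. u i * S i j) + (\<Sum>i\<in>{1..m}. u i * c i)"
      using True by (simp add: lift_def sum.distrib algebra_simps)
    moreover have "lift m S c (Suc m) j = 1 + (\<Sum>k\<in>{1..m}. S k j) + (\<Sum>k\<in>{1..m}. c k)"
      using True by (simp add: lift_def sum.distrib add.assoc)
    moreover have "ones (Suc m) j = 1" using True by (simp add: ones_def)
    ultimately show ?thesis unfolding L V P by (simp add: algebra_simps)
  next
    case False
    show ?thesis
    proof (cases "j = Suc m")
      case True
      have "(\<Sum>i\<in>{1..m}. u i * lift m S c i j) = (\<Sum>i\<in>{1..m}. u i * c i)"
        using True by (simp add: lift_def)
      moreover have "lift m S c (Suc m) j = 1 + (\<Sum>k\<in>{1..m}. c k)"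
        using True by (simp add: lift_def)
      moreover have "ones (Suc m) j = 1" using True by (simp add: ones_def)
      moreover have "(\<Sum>i\<in>{1..m}. pr m u i * S i j) = 0" using S True by (simp add: mats_def)
      ultimately show ?thesis unfolding L V P by (simp add: algebra_simps)
    next
      case False
      have "(\<Sum>i\<in>{1..m}. u i * lift m S c i j) = 0"
        using False \<open>j \<notin> {1..m}\<close> by (auto simp: lift_def intro!: sum.neutral)
      moreover have "lift m S c (Suc m) j = 0"
        using False \<open>j \<notin> {1..m}\<close> by (auto simp: lift_def)
      moreover have "ones (Suc m) j = 0" using False \<open>j \<notin> {1..m}\<close> by (auto simp: ones_def)
      moreover have "(\<Sum>i\<in>{1..m}. pr m u i * S i j) = 0" using S \<open>j \<notin> {1..m}\<close> by (simp add: mats_def)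
      ultimately show ?thesis unfolding L V by simp
    qed
  qed
qed

context stp begin

lemma lift_O: assumes S: "S \<in> mats m" and Si: "mat_invertible m S" and c: "c \<in> vecs m"
  and Q: "\<And>x. x \<in> vecs m \<Longrightarrow> Qf f m (vec_mat m x S) + (\<Sum>i\<in>{1..m}. x i * c i) * Qf f (Suc m) (ones (Suc m)) = Qf f m x"
  shows "lift m S c \<in> carrier (O_group f (Suc m))"
proof -
  let ?M = "lift m S c"
  have xS: "vec_mat m x S \<in> vecs m" for x using vec_mat_vecs[OF S] .
  have QQ: "Qf f (Suc m) (vec_mat (Suc m) u ?M) = Qf f (Suc m) u" if u: "u \<in> vecs (Suc m)" for u
  proof -
    let ?x = "pr m u" and ?t = "u (Suc m)" and ?q = "Qf f (Suc m) (ones (Suc m))"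
    have "Qf f (Suc m) (vec_mat (Suc m) u ?M)
        = Qf f (Suc m) (vec_mat m ?x S) + ((\<Sum>i\<in>{1..m}. ?x i * c i) + ?t) * ?q"
      unfolding lift_act[OF S] by (rule Qf_plus_ones)
    also have "Qf f (Suc m) (vec_mat m ?x S) = Qf f m (vec_mat m ?x S)" by (rule Qf_restrict[OF xS])
    also have "Qf f m (vec_mat m ?x S) + ((\<Sum>i\<in>{1..m}. ?x i * c i) + ?t) * ?q
       = (Qf f m (vec_mat m ?x S) + (\<Sum>i\<in>{1..m}. ?x i * c i) * ?q) + ?t * ?q"
      by (simp add: algebra_simps)
    also have "\<dots> = Qf f m ?x + ?t * ?q" using Q[OF pr_vecs] by simp
    also have "\<dots> = Qf f (Suc m) ?x + ?t * ?q" using Qf_restrict[OF pr_vecs] by simp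
    also have "\<dots> = Qf f (Suc m) (\<lambda>i. ?x i + ?t * ones (Suc m) i)" by (rule Qf_plus_ones[symmetric])
    also have "\<dots> = Qf f (Suc m) u" using pr_decomp[OF u] by simp
    finally show ?thesis .
  qed
  have inv: "mat_invertible (Suc m) ?M"
  proof (rule invertibleI[OF lift_mats])
    fix u assume u: "u \<in> vecs (Suc m)" and z: "vec_mat (Suc m) u ?M = (\<lambda>j. 0)"
    let ?x = "pr m u" and ?t = "u (Suc m)"
    have e: "(\<lambda>j. vec_mat m ?x S j + ((\<Sum>i\<in>{1..m}. ?x i * c i) + ?t) * ones (Suc m) j) = (\<lambda>j. 0)"
      using z unfolding lift_act[OF S] .
    have "pr m (\<lambda>j. vec_mat m ?x S j + ((\<Sum>i\<in>{1..m}. ?x i * c i) + ?t) * ones (Suc m) j) = vec_mat m ?x S"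
      unfolding pr_add_ones by (rule pr_id[OF xS])
    then have "vec_mat m ?x S = pr m (\<lambda>j. 0)" using e by simp
    also have "pr m (\<lambda>j. 0) = (\<lambda>j. 0)" by (rule ext) (simp add: pr_def)
    finally have xS0: "vec_mat m ?x S = (\<lambda>j. 0)" .
    obtain S' where S': "mat_mult m S S' = mat_id m" using Si unfolding mat_invertible_def by blast
    have "?x = vec_mat m ?x (mat_mult m S S')" unfolding S' using vec_mat_id[OF pr_vecs] by simp
    also have "\<dots> = (\<lambda>j. 0)" unfolding vec_mat_mult xS0 vec_mat_zero ..
    finally have x0: "?x = (\<lambda>j. 0)" .
    have "?t = 0"
    proof -
      have "vec_mat m ?x S 1 + ((\<Sum>i\<in>{1..m}. ?x i * c i) + ?t) * ones (Suc m) 1 = 0"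
        using fun_cong[OF e, of 1] by simp
      then show ?thesis using xS0 x0 by (simp add: ones_def)
    qed
    then show "u = (\<lambda>j. 0)" using pr_decomp[OF u] x0 by simp
  qed
  show ?thesis using O_carrier[OF fn] lift_mats inv QQ by blast
qed

end



lemma additive_sum: assumes add: "\<And>x y. x \<in> vecs m \<Longrightarrow> y \<in> vecs m \<Longrightarrow> g (\<lambda>i. x i + y i) = g x + (g y :: bit)"
  and x: "x \<in> vecs m"
  shows "g x = (\<Sum>i\<in>{1..m}. x i * g (ev i))"
proof -
  have z: "g (\<lambda>i. 0) = 0"
  proof -
    have v0: "(\<lambda>i. 0::bit) \<in> vecs m" by (simp add: vecs_def)
    have "g (\<lambda>i. 0 + 0) = g (\<lambda>i. 0) + g (\<lambda>i. 0)" by (rule add[OF v0 v0])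
    then show ?thesis by simp
  qed
  have "\<forall>x\<in>vecs m. (\<forall>i>k. x i = 0) \<longrightarrow> g x = (\<Sum>i\<in>{1..k}. x i * g (ev i))" if "k \<le> m" for k
    using that
  proof (induction k)
    case 0
    show ?case
    proof (intro ballI impI)
      fix x assume x: "x \<in> vecs m" and h: "\<forall>i>0. x i = 0"
      have "x = (\<lambda>i. 0)"
      proof (rule ext)
        fix i show "x i = 0" by (cases "i = 0") (use x h in \<open>auto simp: vecs_def\<close>)
      qed
      then show "g x = (\<Sum>i\<in>{1..0}. x i * g (ev i))" using z by simp
    qed
  next
    case (Suc k)
    show ?case
    proof (intro ballI impI)
      fix x assume x: "x \<in> vecs m" and h: "\<forall>i>Suc k. x i = 0"
      let ?x' = "x(Suc k := 0)" and ?e = "\<lambda>i. x (Suc k) * ev (Suc k) i"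
      have x': "?x' \<in> vecs m" using x by (auto simp: vecs_def)
      have e: "?e \<in> vecs m" using Suc.prems by (auto simp: vecs_def ev_def)
      have xx: "x = (\<lambda>i. ?x' i + ?e i)" by (auto simp: fun_eq_iff ev_def)
      have ge: "g ?e = x (Suc k) * g (ev (Suc k))"
        by (cases "x (Suc k)") (simp_all add: z)
      have "g x = g ?x' + g ?e" using add[OF x' e] xx by simp
      also have "g ?x' = (\<Sum>i\<in>{1..k}. ?x' i * g (ev i))" using Suc.IH Suc.prems x' h by auto
      also have "\<dots> = (\<Sum>i\<in>{1..k}. x i * g (ev i))" by (intro sum.cong) auto
      finally show "g x = (\<Sum>i\<in>{1..Suc k}. x i * g (ev i))" using ge by simp
    qed
  qed
  from this[of m] x show ?thesis by (auto simp: vecs_def)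
qed

lemma Bf_ev_ev: "i \<in> {1..m} \<Longrightarrow> j \<in> {1..m} \<Longrightarrow> Bf f m (ev i) (ev j) = ob f i j"
  by (simp add: Bf_ev2 ev_def ite_mult)

lemma Sp_entry: assumes "fam_min f \<le> m" "S \<in> mats m" "i \<in> {1..m}" "j \<in> {1..m}"
  shows "mat_mult m (mat_mult m S (OmegaBar f m)) (mat_transpose S) i j = Bf f m (\<lambda>a. S i a) (\<lambda>b. S j b)"
proof -
  have "mat_mult m (mat_mult m S (OmegaBar f m)) (mat_transpose S) i j
      = (\<Sum>b\<in>{1..m}. \<Sum>a\<in>{1..m}. S i a * ob f a b * S j b)"
    unfolding mat_mult_def mat_transpose_def using assms(1)
    by (simp add: OmegaBar_eq sum_distrib_right)
  also have "\<dots> = Bf f m (\<lambda>a. S i a) (\<lambda>b. S j b)" unfolding Bf_def by (rule sum.swap)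
  finally show ?thesis .
qed

lemma Sp_carrier: "S \<in> carrier (Sp_group f m) \<longleftrightarrow> S \<in> mats m \<and> mat_invertible m S \<and>
   mat_mult m (mat_mult m S (OmegaBar f m)) (mat_transpose S) = OmegaBar f m"
  by (simp add: Sp_group_def)

lemma SpI: assumes m: "fam_min f \<le> m" and S: "S \<in> mats m" "mat_invertible m S"
  and B: "\<And>i j. i \<in> {1..m} \<Longrightarrow> j \<in> {1..m} \<Longrightarrow> Bf f m (\<lambda>a. S i a) (\<lambda>b. S j b) = ob f i j"
  shows "S \<in> carrier (Sp_group f m)"
proof -
  have "mat_mult m (mat_mult m S (OmegaBar f m)) (mat_transpose S) = OmegaBar f m"
  proof (intro ext)
    fix i j
    show "mat_mult m (mat_mult m S (OmegaBar f m)) (mat_transpose S) i j = OmegaBar f m i j"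
    proof (cases "i \<in> {1..m} \<and> j \<in> {1..m}")
      case True
      then show ?thesis using Sp_entry[OF m S(1)] B OmegaBar_eq[OF m] by simp
    next
      case False
      then show ?thesis using S(1) OmegaBar_eq[OF m]
        by (auto simp: mat_mult_def mat_transpose_def mats_def)
    qed
  qed
  then show ?thesis using S Sp_carrier by blast
qed

lemma Sp_Bf: assumes m: "fam_min f \<le> m" and S: "S \<in> carrier (Sp_group f m)" and x: "x \<in> vecs m" and y: "y \<in> vecs m"
  shows "Bf f m (vec_mat m x S) (vec_mat m y S) = Bf f m x y"
proof -
  have Sm: "S \<in> mats m" and E: "mat_mult m (mat_mult m S (OmegaBar f m)) (mat_transpose S) = OmegaBar f m"
    using S Sp_carrier by blast+
  have ee: "Bf f m (vec_mat m (ev i) S) (vec_mat m (ev j) S) = Bf f m (ev i) (ev j)" if "i \<in> {1..m}" "j \<in> {1..m}" for i j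
  proof -
    have "Bf f m (vec_mat m (ev i) S) (vec_mat m (ev j) S) = mat_mult m (mat_mult m S (OmegaBar f m)) (mat_transpose S) i j"
      unfolding vec_mat_ev[OF that(1)] vec_mat_ev[OF that(2)] using Sp_entry[OF m Sm that] by simp
    then show ?thesis unfolding E using OmegaBar_eq[OF m] Bf_ev_ev that by simp
  qed
  have ey: "Bf f m (vec_mat m (ev i) S) (vec_mat m y S) = Bf f m (ev i) y" if i: "i \<in> {1..m}" for i
  proof -
    let ?h = "\<lambda>y. Bf f m (vec_mat m (ev i) S) (vec_mat m y S) + Bf f m (ev i) y"
    have "?h y = (\<Sum>j\<in>{1..m}. y j * ?h (ev j))"
      by (rule additive_sum[OF _ y]) (simp add: vec_mat_add Bf_add2 algebra_simps)
    also have "\<dots> = 0" using ee[OF i] by (intro sum.neutral) auto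
    finally show ?thesis by (metis add_cancel_right_left bit_eq_from_sum)
  qed
  let ?h = "\<lambda>x. Bf f m (vec_mat m x S) (vec_mat m y S) + Bf f m x y"
  have "?h x = (\<Sum>i\<in>{1..m}. x i * ?h (ev i))"
    by (rule additive_sum[OF _ x]) (simp add: vec_mat_add Bf_add1 algebra_simps)
  also have "\<dots> = 0" using ey by (intro sum.neutral) auto
  finally show ?thesis by (metis add_cancel_right_left bit_eq_from_sum)
qed



context stp begin

lemma Phi_Sp: assumes M: "M \<in> carrier (O_group f (Suc m))" shows "Phi m M \<in> carrier (Sp_group f m)"
proof (rule SpI[OF fm Phi_mats Phi_invertible[OF M]])
  fix i j assume i: "i \<in> {1..m}" and j: "j \<in> {1..m}"
  have "Bf f m (\<lambda>a. Phi m M i a) (\<lambda>b. Phi m M j b) = Bf f m (vec_mat m (ev i) (Phi m M)) (vec_mat m (ev j) (Phi m M))"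
    unfolding vec_mat_ev[OF i] vec_mat_ev[OF j] ..
  also have "\<dots> = Bf f m (ev i) (ev j)" by (rule Bf_Phi[OF M ev_vecs[OF i] ev_vecs[OF j]])
  also have "\<dots> = ob f i j" by (rule Bf_ev_ev[OF i j])
  finally show "Bf f m (\<lambda>a. Phi m M i a) (\<lambda>b. Phi m M j b) = ob f i j" .
qed

lemma col_from_Q: assumes M: "M \<in> carrier (O_group f (Suc m))" and i: "i \<in> {1..m}"
  shows "Qf f m (vec_mat m (ev i) (Phi m M)) + M i (Suc m) * Qf f (Suc m) (ones (Suc m)) = Qf f m (ev i)"
proof -
  have i': "i \<in> {1..Suc m}" using i by auto
  show ?thesis using Q_Phi[OF M ev_vecs[OF i]] vec_mat_ev[OF i', of M] by simp
qed

theorem case1: assumes q: "Qf f (Suc m) (ones (Suc m)) = 1"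
  shows "O_group f (Suc m) \<cong> Sp_group f m"
proof (rule is_isoI)
  show "Phi m \<in> iso (O_group f (Suc m)) (Sp_group f m)"
    unfolding iso_def
  proof (intro CollectI conjI)
    show "Phi m \<in> hom (O_group f (Suc m)) (Sp_group f m)"
      unfolding hom_def using Phi_Sp Phi_mult by (auto simp: O_group_def Sp_group_def)
    show "bij_betw (Phi m) (carrier (O_group f (Suc m))) (carrier (Sp_group f m))"
    proof (rule bij_betw_imageI)
      show "inj_on (Phi m) (carrier (O_group f (Suc m)))"
      proof (rule inj_onI)
        fix M N assume M: "M \<in> carrier (O_group f (Suc m))" and N: "N \<in> carrier (O_group f (Suc m))"
          and e: "Phi m M = Phi m N"
        show "M = N"
        proof (rule Phi_eqD[OF M N e])
          fix i assume i: "i \<in> {1..m}"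
          show "M i (Suc m) = N i (Suc m)" using col_from_Q[OF M i] col_from_Q[OF N i] e q
            by (metis add_left_imp_eq mult_1_right)
        qed
      qed
      show "Phi m ` carrier (O_group f (Suc m)) = carrier (Sp_group f m)"
      proof
        show "Phi m ` carrier (O_group f (Suc m)) \<subseteq> carrier (Sp_group f m)" using Phi_Sp by blast
        show "carrier (Sp_group f m) \<subseteq> Phi m ` carrier (O_group f (Suc m))"
        proof
          fix S assume S: "S \<in> carrier (Sp_group f m)"
          have Sm: "S \<in> mats m" and Si: "mat_invertible m S" using S Sp_carrier by blast+
          let ?g = "\<lambda>x. Qf f m (vec_mat m x S) + Qf f m x"
          define c where "c = (\<lambda>i. if i \<in> {1..m} then ?g (ev i) else 0)"
          have c: "c \<in> vecs m" by (simp add: c_def vecs_def)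
          have gadd: "?g (\<lambda>i. x i + y i) = ?g x + ?g y" if "x \<in> vecs m" "y \<in> vecs m" for x y
          proof -
            have "Bf f m (vec_mat m x S) (vec_mat m y S) = Bf f m x y" by (rule Sp_Bf[OF fm S that])
            then show ?thesis unfolding vec_mat_add Qf_add by (simp add: algebra_simps)
          qed
          have QC: "Qf f m (vec_mat m x S) + (\<Sum>i\<in>{1..m}. x i * c i) * Qf f (Suc m) (ones (Suc m)) = Qf f m x"
            if x: "x \<in> vecs m" for x
          proof -
            have "(\<Sum>i\<in>{1..m}. x i * c i) = (\<Sum>i\<in>{1..m}. x i * ?g (ev i))"
              by (intro sum.cong) (auto simp: c_def)
            also have "\<dots> = ?g x" by (rule additive_sum[OF gadd x, symmetric])
            finally show ?thesis unfolding q by (simp add: add.assoc[symmetric])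
          qed
          have L: "lift m S c \<in> carrier (O_group f (Suc m))" by (rule lift_O[OF Sm Si c QC])
          have "Phi m (lift m S c) = S" by (rule Phi_lift[OF Sm])
          then show "S \<in> Phi m ` carrier (O_group f (Suc m))" using L by force
        qed
      qed
    qed
  qed
qed

end



definition colact :: "nat \<Rightarrow> (nat \<Rightarrow> nat \<Rightarrow> bit) \<Rightarrow> (nat \<Rightarrow> bit) \<Rightarrow> (nat \<Rightarrow> bit)" where
  "colact m A v = (\<lambda>i. if i \<in> {1..m} then \<Sum>j\<in>{1..m}. A i j * v j else 0)"

definition phi :: "nat \<Rightarrow> (nat \<Rightarrow> nat \<Rightarrow> bit) \<Rightarrow> (nat \<Rightarrow> bit) \<Rightarrow> (nat \<Rightarrow> bit)" where
  "phi m A = restrict (colact m A) (vecs m)"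

definition Psi :: "nat \<Rightarrow> (nat \<Rightarrow> nat \<Rightarrow> bit) \<Rightarrow> (nat \<Rightarrow> bit) \<times> (nat \<Rightarrow> nat \<Rightarrow> bit)" where
  "Psi m M = ((\<lambda>i. if i \<in> {1..m} then M i (Suc m) else 0), Phi m M)"

lemma colact_vecs: "colact m A v \<in> vecs m" by (simp add: colact_def vecs_def)

lemma colact_mult: "colact m (mat_mult m A B) v = colact m A (colact m B v)"
proof (rule ext)
  fix i
  show "colact m (mat_mult m A B) v i = colact m A (colact m B v) i"
  proof (cases "i \<in> {1..m}")
    case True
    have "colact m A (colact m B v) i = (\<Sum>k\<in>{1..m}. A i k * (\<Sum>j\<in>{1..m}. B k j * v j))"
      using True unfolding colact_def by (auto intro!: sum.cong)
    also have "\<dots> = (\<Sum>j\<in>{1..m}. \<Sum>k\<in>{1..m}. A i k * B k j * v j)"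
      by (simp add: sum_distrib_left mult_ac) (rule sum.swap)
    also have "\<dots> = colact m (mat_mult m A B) v i"
      using True unfolding colact_def mat_mult_def by (simp add: sum_distrib_right)
    finally show ?thesis by simp
  next
    case False then show ?thesis by (auto simp: colact_def)
  qed
qed

lemma colact_id: "v \<in> vecs m \<Longrightarrow> colact m (mat_id m) v = v"
  unfolding colact_def mat_id_def vecs_def
  by (rule ext) (auto simp: ite_mult)

lemma colact_add: "colact m A (\<lambda>i. u i + v i) = (\<lambda>i. colact m A u i + colact m A v i)"
  unfolding colact_def by (rule ext) (simp add: sum.distrib algebra_simps)

lemma vec_group_simps: "carrier (vec_group m) = vecs m" "mult (vec_group m) = (\<lambda>u v i. u i + v i)"
  by (simp_all add: vec_group_def)

lemma phi_Bij: assumes A: "A \<in> mats m" "mat_invertible m A" shows "phi m A \<in> Bij (vecs m)"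
proof -
  obtain B where B: "B \<in> mats m" "mat_mult m A B = mat_id m" "mat_mult m B A = mat_id m"
    using A(2) unfolding mat_invertible_def by blast
  have "bij_betw (phi m A) (vecs m) (vecs m)"
  proof (rule bij_betw_byWitness[where f' = "colact m B"])
    show "\<forall>a\<in>vecs m. colact m B (phi m A a) = a"
      using B(3) colact_id by (simp add: phi_def colact_mult[symmetric])
    show "\<forall>a'\<in>vecs m. phi m A (colact m B a') = a'"
      using B(2) colact_id colact_vecs by (simp add: phi_def colact_mult[symmetric])
    show "phi m A ` vecs m \<subseteq> vecs m" using colact_vecs by (auto simp: phi_def)
    show "colact m B ` vecs m \<subseteq> vecs m" using colact_vecs by auto
  qed
  then show ?thesis by (simp add: Bij_def phi_def)
qed

lemma phi_auto: assumes A: "A \<in> mats m" "mat_invertible m A" shows "phi m A \<in> auto (vec_group m)"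
proof -
  have "phi m A \<in> hom (vec_group m) (vec_group m)"
    unfolding hom_def vec_group_simps
    using colact_vecs colact_add add_vecs by (auto simp: phi_def)
  then show ?thesis using phi_Bij[OF A] by (simp add: auto_def vec_group_simps)
qed

context stp begin

lemma phi_hom: "phi m \<in> hom (O_group f m) (AutoGroup (vec_group m))"
proof -
  have c: "A \<in> carrier (O_group f m) \<Longrightarrow> A \<in> mats m \<and> mat_invertible m A" for A
    using O_carrier[OF fm] by blast
  have m: "phi m (mat_mult m A B) = compose (vecs m) (phi m A) (phi m B)"
    if "A \<in> carrier (O_group f m)" "B \<in> carrier (O_group f m)" for A B
    unfolding phi_def compose_def
    by (rule ext) (simp add: colact_mult colact_vecs)
  show ?thesis unfolding hom_def
    using c phi_auto phi_Bij m
    by (auto simp: AutoGroup_def BijGroup_def vec_group_simps O_group_def)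
qed

lemma Phi_O: assumes q: "Qf f (Suc m) (ones (Suc m)) = 0" and M: "M \<in> carrier (O_group f (Suc m))"
  shows "Phi m M \<in> carrier (O_group f m)"
  using O_carrier[OF fm] Phi_mats Phi_invertible[OF M] Q_Phi[OF M] q by simp

lemma Psi_first: assumes M: "M \<in> carrier (O_group f (Suc m))" and N: "N \<in> carrier (O_group f (Suc m))"
  and i: "i \<in> {1..m}"
  shows "mat_mult (Suc m) M N i (Suc m) = M i (Suc m) + colact m (Phi m M) (\<lambda>i. if i \<in> {1..m} then N i (Suc m) else 0) i"
proof -
  have vo: "vec_mat (Suc m) (ones (Suc m)) N (Suc m) = (\<Sum>k\<in>{1..Suc m}. N k (Suc m))"
    unfolding vec_mat_def ones_def by (intro sum.cong) auto
  have cs: "(\<Sum>k\<in>{1..m}. N k (Suc m)) + N (Suc m) (Suc m) = 1"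
    using fun_cong[OF ones_fixed[OF N], of "Suc m"] vo by (simp add: ones_def)
  have "colact m (Phi m M) (\<lambda>i. if i \<in> {1..m} then N i (Suc m) else 0) i
      = (\<Sum>j\<in>{1..m}. (M i j + M i (Suc m)) * N j (Suc m))"
    using i unfolding colact_def Phi_def by (auto intro!: sum.cong)
  also have "\<dots> = (\<Sum>j\<in>{1..m}. M i j * N j (Suc m)) + M i (Suc m) * (\<Sum>j\<in>{1..m}. N j (Suc m))"
    by (simp add: algebra_simps sum.distrib sum_distrib_left)
  finally have C: "colact m (Phi m M) (\<lambda>i. if i \<in> {1..m} then N i (Suc m) else 0) i = \<dots>" .
  have "mat_mult (Suc m) M N i (Suc m) = (\<Sum>j\<in>{1..m}. M i j * N j (Suc m)) + M i (Suc m) * N (Suc m) (Suc m)"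
    by (simp add: mat_mult_def)
  also have "N (Suc m) (Suc m) = 1 + (\<Sum>j\<in>{1..m}. N j (Suc m))" using cs
    by (metis add.commute add_cancel_right_left bit_add_self add.assoc)
  finally show ?thesis unfolding C by (simp add: algebra_simps)
qed

theorem case3: assumes q: "Qf f (Suc m) (ones (Suc m)) = 0"
  shows "O_group f (Suc m) \<cong> semidirect_prod (vec_group m) (O_group f m) (phi m)"
proof (rule is_isoI)
  let ?G = "O_group f (Suc m)" and ?H = "semidirect_prod (vec_group m) (O_group f m) (phi m)"
  have cH: "carrier ?H = vecs m \<times> carrier (O_group f m)"
    by (simp add: semidirect_prod_def vec_group_simps)
  have PsiC: "Psi m M \<in> carrier ?H" if M: "M \<in> carrier ?G" for M
    unfolding cH Psi_def using Phi_O[OF q M] by (auto simp: vecs_def)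
  have mH: "mult ?H (a, A) (b, B) = ((\<lambda>i. a i + phi m A b i), mat_mult m A B)" for a A b B
    by (simp add: semidirect_prod_def vec_group_simps O_group_def)
  show "Psi m \<in> iso ?G ?H"
    unfolding iso_def
  proof (intro CollectI conjI)
    show "Psi m \<in> hom ?G ?H"
      unfolding hom_def
    proof (intro CollectI conjI ballI)
      show "Psi m \<in> carrier ?G \<rightarrow> carrier ?H" using PsiC by blast
      fix M N assume M: "M \<in> carrier ?G" and N: "N \<in> carrier ?G"
      have mG: "mult ?G M N = mat_mult (Suc m) M N" by (simp add: O_group_def)
      have v: "(\<lambda>i. if i \<in> {1..m} then N i (Suc m) else 0) \<in> vecs m" by (simp add: vecs_def)
      show "Psi m (M \<otimes>\<^bsub>?G\<^esub> N) = Psi m M \<otimes>\<^bsub>?H\<^esub> Psi m N"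
        unfolding mG Psi_def mH Phi_mult[OF M N]
        using Psi_first[OF M N] v by (auto simp: phi_def fun_eq_iff colact_def)
    qed
    show "bij_betw (Psi m) (carrier ?G) (carrier ?H)"
    proof (rule bij_betw_imageI)
      show "inj_on (Psi m) (carrier ?G)"
      proof (rule inj_onI)
        fix M N assume M: "M \<in> carrier ?G" and N: "N \<in> carrier ?G" and e: "Psi m M = Psi m N"
        have e1: "Phi m M = Phi m N" using e by (simp add: Psi_def)
        show "M = N"
        proof (rule Phi_eqD[OF M N e1])
          fix i assume i: "i \<in> {1..m}"
          have "(\<lambda>i. if i \<in> {1..m} then M i (Suc m) else 0) = (\<lambda>i. if i \<in> {1..m} then N i (Suc m) else 0)"
            using e by (simp add: Psi_def)
          then show "M i (Suc m) = N i (Suc m)" using i by (metis (mono_tags, lifting))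
        qed
      qed
      show "Psi m ` carrier ?G = carrier ?H"
      proof
        show "Psi m ` carrier ?G \<subseteq> carrier ?H" using PsiC by blast
        show "carrier ?H \<subseteq> Psi m ` carrier ?G"
        proof
          fix p assume p: "p \<in> carrier ?H"
          obtain c A where pc: "p = (c, A)" and c: "c \<in> vecs m" and A: "A \<in> carrier (O_group f m)"
            using p cH by auto
          have Am: "A \<in> mats m" and Ai: "mat_invertible m A" using A O_carrier[OF fm] by blast+
          have L: "lift m A c \<in> carrier ?G"
            by (rule lift_O[OF Am Ai c]) (simp add: q O_Q[OF fm A])
          have "Psi m (lift m A c) = (c, A)"
            unfolding Psi_def Phi_lift[OF Am] using c by (auto simp: lift_col fun_eq_iff vecs_def)
          then show "p \<in> Psi m ` carrier ?G" using L pc by force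
        qed
      qed
    qed
  qed
qed

end


theorem lemma5p3:
  fixes f :: family and d :: nat
  assumes "odd d" and "d \<ge> 7" and "fam_min f \<le> d - 1"
  shows "(d mod 4 = 1 \<longrightarrow> O_group f d \<cong> Sp_group f (d - 1))
       \<and> (d mod 4 = 3 \<longrightarrow>
            (\<exists>\<phi>. \<phi> \<in> hom (O_group f (d - 1)) (AutoGroup (vec_group (d - 1)))
                 \<and> O_group f d \<cong> semidirect_prod (vec_group (d - 1)) (O_group f (d - 1)) \<phi>))"
proof -
  define m where "m = d - 1"
  have d: "d = Suc m" using assms(2) by (simp add: m_def)
  have S: "stp f m" unfolding stp_def m_def using assms by simp
  have fd: "fam_min f \<le> d" using assms(3) by simp
  show ?thesis
  proof (intro conjI impI)
    assume "d mod 4 = 1"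
    then have "Qf f (Suc m) (ones (Suc m)) = 1" using Qf_ones_1[OF fd] d by simp
    then have "O_group f (Suc m) \<cong> Sp_group f m" by (rule stp.case1[OF S])
    then show "O_group f d \<cong> Sp_group f (d - 1)" using d by simp
  next
    assume "d mod 4 = 3"
    then have "Qf f (Suc m) (ones (Suc m)) = 0" using Qf_ones_3[OF fd] d by simp
    then show "\<exists>\<phi>. \<phi> \<in> hom (O_group f (d - 1)) (AutoGroup (vec_group (d - 1)))
                 \<and> O_group f d \<cong> semidirect_prod (vec_group (d - 1)) (O_group f (d - 1)) \<phi>"
    proof -
      have "O_group f (Suc m) \<cong> semidirect_prod (vec_group m) (O_group f m) (phi m)"
        by (rule stp.case3[OF S \<open>Qf f (Suc m) (ones (Suc m)) = 0\<close>])
      moreover have "phi m \<in> hom (O_group f m) (AutoGroup (vec_group m))" by (rule stp.phi_hom[OF S])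
      moreover have "Suc m = d" "m = d - 1" using d by simp_all
      ultimately show ?thesis by metis
    qed
  qed
qed

end
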